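(* There is an absolute constant $C$ such that for every $n\geq 1$, every $w\in\{0,1\}^n$, and every nonempty set $\mathcal{B}\subseteq\{0,1\}^n\setminus\{w\}$, there is a first-order sentence over $\tau_{\mathsf{string}}$ with at most $\log_2(n)+\log_2|\mathcal{B}|+C$ quantifiers that is true in $\mathbf{B}_w$ and false in $\mathbf{B}_{w'}$ for every $w'\in\mathcal{B}$.
   Context: Vocabulary $\tau_{\mathsf{string}}=\langle <, S;\ \mathsf{min},\mathsf{max}\rangle$ with $<$ binary, $S$ unary, $\mathsf{min},\mathsf{max}$ constants. A string $w=w_1\cdots w_n\in\{0,1\}^n$ ($n\geq 1$) is encoded by the structure $\mathbf{B}_w$ with universe $\{1,\dots,n\}$, $<$ the usual order, $S=\{i: w_i=1\}$, $\mathsf{min}=1$, $\mathsf{max}=n$. The number of quantifiers is the number of quantifier occurrences. *)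

theory Defs
  imports Complex_Main
begin

datatype tm = Var nat | Cmin | Cmax

datatype fo =
    FTrue
  | FFalse
  | Eq tm tm
  | Less tm tm
  | Sym tm
  | Neg fo
  | Conj fo fo
  | Disj fo fo
  | Impl fo fo
  | Exi nat fo
  | Alli nat fo

fun tm_vars :: "tm \<Rightarrow> nat set" where
  "tm_vars (Var i) = {i}"
| "tm_vars Cmin = {}"
| "tm_vars Cmax = {}"

fun free_vars :: "fo \<Rightarrow> nat set" where
  "free_vars FTrue = {}"
| "free_vars FFalse = {}"
| "free_vars (Eq s t) = tm_vars s \<union> tm_vars t"
| "free_vars (Less s t) = tm_vars s \<union> tm_vars t"
| "free_vars (Sym t) = tm_vars t"
| "free_vars (Neg p) = free_vars p"
| "free_vars (Conj p q) = free_vars p \<union> free_vars q"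
| "free_vars (Disj p q) = free_vars p \<union> free_vars q"
| "free_vars (Impl p q) = free_vars p \<union> free_vars q"
| "free_vars (Exi x p) = free_vars p - {x}"
| "free_vars (Alli x p) = free_vars p - {x}"

definition sentence :: "fo \<Rightarrow> bool" where
  "sentence p \<longleftrightarrow> free_vars p = {}"

fun nquant :: "fo \<Rightarrow> nat" where
  "nquant FTrue = 0"
| "nquant FFalse = 0"
| "nquant (Eq s t) = 0"
| "nquant (Less s t) = 0"
| "nquant (Sym t) = 0"
| "nquant (Neg p) = nquant p"
| "nquant (Conj p q) = nquant p + nquant q"
| "nquant (Disj p q) = nquant p + nquant q"
| "nquant (Impl p q) = nquant p + nquant q"
| "nquant (Exi x p) = Suc (nquant p)"
| "nquant (Alli x p) = Suc (nquant p)"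

text \<open>The structure B_w for a word w = w_1...w_n (list, w_i = w ! (i-1), True = 1):
  universe {1..n}, usual order, S = {i. w_i = 1}, min = 1, max = n.\<close>

fun tm_eval :: "bool list \<Rightarrow> (nat \<Rightarrow> nat) \<Rightarrow> tm \<Rightarrow> nat" where
  "tm_eval w \<sigma> (Var i) = \<sigma> i"
| "tm_eval w \<sigma> Cmin = 1"
| "tm_eval w \<sigma> Cmax = length w"

fun sat :: "bool list \<Rightarrow> (nat \<Rightarrow> nat) \<Rightarrow> fo \<Rightarrow> bool" where
  "sat w \<sigma> FTrue = True"
| "sat w \<sigma> FFalse = False"
| "sat w \<sigma> (Eq s t) = (tm_eval w \<sigma> s = tm_eval w \<sigma> t)"
| "sat w \<sigma> (Less s t) = (tm_eval w \<sigma> s < tm_eval w \<sigma> t)"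
| "sat w \<sigma> (Sym t) = (w ! (tm_eval w \<sigma> t - 1))"
| "sat w \<sigma> (Neg p) = (\<not> sat w \<sigma> p)"
| "sat w \<sigma> (Conj p q) = (sat w \<sigma> p \<and> sat w \<sigma> q)"
| "sat w \<sigma> (Disj p q) = (sat w \<sigma> p \<or> sat w \<sigma> q)"
| "sat w \<sigma> (Impl p q) = (sat w \<sigma> p \<longrightarrow> sat w \<sigma> q)"
| "sat w \<sigma> (Exi x p) = (\<exists>a\<in>{1..length w}. sat w (\<sigma>(x := a)) p)"
| "sat w \<sigma> (Alli x p) = (\<forall>a\<in>{1..length w}. sat w (\<sigma>(x := a)) p)"

text \<open>Truth of a sentence in B_w (the assignment is irrelevant for sentences;
  we use the constant assignment to the element 1).\<close>
definition models :: "bool list \<Rightarrow> fo \<Rightarrow> bool" where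
  "models w p \<longleftrightarrow> sat w (\<lambda>_. 1) p"

end

theory Submission
  imports Defs
begin


lemma tm_eval_agree: "(\<forall>i\<in>tm_vars t. \<sigma> i = \<sigma>' i) \<Longrightarrow> tm_eval w \<sigma> t = tm_eval w \<sigma>' t"
  by (cases t) auto

lemma sat_agree: "(\<forall>i\<in>free_vars \<phi>. \<sigma> i = \<sigma>' i) \<Longrightarrow> sat w \<sigma> \<phi> = sat w \<sigma>' \<phi>"
proof (induction \<phi> arbitrary: \<sigma> \<sigma>')
  case (Eq s t) then show ?case using tm_eval_agree[of s \<sigma> \<sigma>' w] tm_eval_agree[of t \<sigma> \<sigma>' w] by auto
next
  case (Less s t) then show ?case using tm_eval_agree[of s \<sigma> \<sigma>' w] tm_eval_agree[of t \<sigma> \<sigma>' w] by auto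
next
  case (Sym t) then show ?case using tm_eval_agree[of t \<sigma> \<sigma>' w] by auto
next
  case (Exi x p)
  have "\<And>a. sat w (\<sigma>(x:=a)) p = sat w (\<sigma>'(x:=a)) p"
    by (rule Exi.IH) (use Exi.prems in auto)
  then show ?case by simp
next
  case (Alli x p)
  have "\<And>a. sat w (\<sigma>(x:=a)) p = sat w (\<sigma>'(x:=a)) p"
    by (rule Alli.IH) (use Alli.prems in auto)
  then show ?case by simp
next
  case (Conj p q)
  have "sat w \<sigma> p = sat w \<sigma>' p" "sat w \<sigma> q = sat w \<sigma>' q" using Conj.prems by (auto intro!: Conj.IH)
  then show ?case by simp
next
  case (Disj p q)
  have "sat w \<sigma> p = sat w \<sigma>' p" "sat w \<sigma> q = sat w \<sigma>' q" using Disj.prems by (auto intro!: Disj.IH)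
  then show ?case by simp
next
  case (Impl p q)
  have "sat w \<sigma> p = sat w \<sigma>' p" "sat w \<sigma> q = sat w \<sigma>' q" using Impl.prems by (auto intro!: Impl.IH)
  then show ?case by simp
qed auto

fun bv :: "fo \<Rightarrow> nat set" where
  "bv (Neg p) = bv p"
| "bv (Conj p q) = bv p \<union> bv q"
| "bv (Disj p q) = bv p \<union> bv q"
| "bv (Impl p q) = bv p \<union> bv q"
| "bv (Exi x p) = insert x (bv p)"
| "bv (Alli x p) = insert x (bv p)"
| "bv _ = {}"

definition dflt :: "fo \<Rightarrow> fo \<Rightarrow> fo \<Rightarrow> fo" where
  "dflt g p q = Disj (Conj g p) (Conj (Neg g) q)"

fun ite :: "fo \<Rightarrow> fo \<Rightarrow> fo \<Rightarrow> fo" where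
  "ite g (Neg p) (Neg q) = Neg (ite g p q)"
| "ite g (Conj p1 p2) (Conj q1 q2) = Conj (ite g p1 q1) (ite g p2 q2)"
| "ite g (Exi x p) (Exi y q) = (if x = y then Exi x (ite g p q) else dflt g (Exi x p) (Exi y q))"
| "ite g p q = dflt g p q"

lemma sat_ite: "(\<forall>x\<in>bv p. x \<notin> free_vars g) \<Longrightarrow>
   sat w \<sigma> (ite g p q) = (if sat w \<sigma> g then sat w \<sigma> p else sat w \<sigma> q)"
proof (induction g p q arbitrary: \<sigma> rule: ite.induct)
  case (3 g x p y q)
  show ?case
  proof (cases "x = y")
    case True
    have "\<And>a. sat w (\<sigma>(x:=a)) g = sat w \<sigma> g"
      by (rule sat_agree) (use 3(2) in auto)
    with 3 True show ?thesis by auto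
  qed (auto simp: dflt_def)
qed (auto simp: dflt_def)

lemma bv_ite: "bv (ite g p q) \<subseteq> bv g \<union> bv p \<union> bv q"
  by (induction g p q rule: ite.induct) (auto simp: dflt_def)

lemma fv_ite: "free_vars (ite g p q) \<subseteq> free_vars g \<union> free_vars p \<union> free_vars q"
  by (induction g p q rule: ite.induct) (auto simp: dflt_def)

fun good :: "fo \<Rightarrow> bool" where
  "good (Neg p) = good p"
| "good (Conj p q) = (good p \<and> good q)"
| "good (Exi x p) = good p"
| "good p = (nquant p = 0)"

fun sh :: "fo \<Rightarrow> fo" where
  "sh (Neg p) = (if nquant p = 0 then FTrue else Neg (sh p))"
| "sh (Conj p q) = (if nquant p + nquant q = 0 then FTrue else Conj (sh p) (sh q))"
| "sh (Exi x p) = Exi x (sh p)"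
| "sh p = FTrue"

lemma qf_good: "nquant p = 0 \<Longrightarrow> good p"
  by (induction p) auto

lemma good_sh: "good p \<Longrightarrow> (sh p = FTrue) = (nquant p = 0)"
  by (induction p) auto

lemma sh_qf: "nquant p = 0 \<Longrightarrow> sh p = FTrue"
  using good_sh qf_good by blast

lemma sh_true: "good q \<Longrightarrow> FTrue = sh q \<Longrightarrow> nquant q = 0"
  using good_sh by metis

lemma qf_ite: "nquant g = 0 \<Longrightarrow> nquant p = 0 \<Longrightarrow> nquant q = 0 \<Longrightarrow> nquant (ite g p q) = 0"
  by (induction g p q rule: ite.induct) (auto simp: dflt_def)

lemma ite_shape: "good p \<Longrightarrow> good q \<Longrightarrow> sh p = sh q \<Longrightarrow> nquant g = 0 \<Longrightarrow>
   nquant (ite g p q) = nquant p \<and> sh (ite g p q) = sh p \<and> good (ite g p q)"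
proof (induction g p q rule: ite.induct)
  case (1 g p q)
  show ?case
  proof (cases "nquant p = 0")
    case True
    then have "nquant q = 0" using 1 good_sh[of q] by (auto split: if_splits)
    then show ?thesis using True 1 qf_ite[of g p q] qf_good by auto
  next
    case False
    then have "nquant q \<noteq> 0" using 1 good_sh[of q] by (auto split: if_splits)
    then show ?thesis using False 1 by auto
  qed
next
  case (2 g p1 p2 q1 q2)
  show ?case
  proof (cases "nquant p1 + nquant p2 = 0")
    case True
    then have "nquant q1 + nquant q2 = 0" using 2 by (auto split: if_splits)
    then show ?thesis using True 2 qf_ite[of g p1 q1] qf_ite[of g p2 q2] qf_good by auto
  next
    case False
    then have "nquant q1 + nquant q2 \<noteq> 0" using 2 by (auto split: if_splits)
    then show ?thesis using False 2 by auto
  qed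
qed (auto simp: dflt_def qf_good sh_qf dest: sh_true split: if_splits)




definition semL :: "nat \<Rightarrow> nat \<Rightarrow> nat \<Rightarrow> nat \<Rightarrow> nat \<Rightarrow> bool" where
  "semL S1 S2 a x b = (a \<le> x \<and> x \<le> b \<and> S1 \<le> x - a \<and> S2 \<le> b - x)"
definition semS :: "nat \<Rightarrow> nat \<Rightarrow> nat \<Rightarrow> nat \<Rightarrow> nat \<Rightarrow> bool" where
  "semS T1 T2 a v b = (1 \<le> T1 \<and> 1 \<le> T2 \<and> a \<le> v \<and> v \<le> b \<and> v - a < T1 \<and> b - v < T2)"

lemma arithL:
  fixes a x b n S1 S2 :: nat
  assumes "1 \<le> a" "a \<le> n" "1 \<le> x" "x \<le> n" "1 \<le> b" "b \<le> n"
  shows "((a \<le> x \<and> x \<le> b \<and> (1 \<le> S1 \<longrightarrow> a < x) \<and> (1 \<le> S2 \<longrightarrow> x < b)) \<and>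
     \<not>(\<exists>c\<in>{1..n}. if c \<le> x then semS ((S1+2) div 2) ((S1+1) div 2) a c x
                    else semS ((S2+2) div 2) ((S2+1) div 2) x c b))
    = semL S1 S2 a x b" (is "(?G \<and> \<not> (\<exists>c\<in>{1..n}. ?P c)) = _")
proof
  assume H: "?G \<and> \<not> (\<exists>c\<in>{1..n}. ?P c)"
  show "semL S1 S2 a x b"
    unfolding semL_def
  proof (intro conjI)
    show "a \<le> x" "x \<le> b" using H by auto
    show "S1 \<le> x - a"
    proof (rule ccontr)
      assume A: "\<not> S1 \<le> x - a"
      define T1 where "T1 = (S1+2) div 2"
      define T2 where "T2 = (S1+1) div 2"
      have T: "T1 + T2 = S1 + 1" "1 \<le> T1" "1 \<le> T2" using A unfolding T1_def T2_def by presburger+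
      define c where "c = max a (x + 1 - T2)"
      have c1: "c \<in> {1..n}" "c \<le> x" using A H assms T unfolding c_def by auto
      have "semS T1 T2 a c x" using c1 A H assms T unfolding semS_def c_def max_def by (auto split: if_splits)
      then have "?P c" using c1 unfolding T1_def T2_def by simp
      then show False using H c1 by blast
    qed
    show "S2 \<le> b - x"
    proof (rule ccontr)
      assume A: "\<not> S2 \<le> b - x"
      define T1 where "T1 = (S2+2) div 2"
      define T2 where "T2 = (S2+1) div 2"
      have T: "T1 + T2 = S2 + 1" "1 \<le> T1" "1 \<le> T2" using A unfolding T1_def T2_def by presburger+
      have x: "x < b" using A H by auto
      have "2 \<le> S2" using A x by linarith
      then have T1b: "2 \<le> T1" unfolding T1_def by presburger
      define c where "c = max (x+1) (b + 1 - T2)"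
      have c1: "c \<in> {1..n}" "\<not> c \<le> x" using A H assms T x unfolding c_def by auto
      have "semS T1 T2 x c b" using c1 A assms T x T1b unfolding semS_def c_def max_def by (auto split: if_splits)
      then have "?P c" using c1 unfolding T1_def T2_def by simp
      then show False using H c1 by blast
    qed
  qed
next
  assume H: "semL S1 S2 a x b"
  have "\<not> ?P c" for c
  proof
    assume P: "?P c"
    show False
    proof (cases "c \<le> x")
      case True
      then have "semS ((S1+2) div 2) ((S1+1) div 2) a c x" using P by simp
      moreover have "(S1+2) div 2 + (S1+1) div 2 = S1 + 1" by presburger
      ultimately show False using H unfolding semS_def semL_def by linarith
    next
      case False
      then have "semS ((S2+2) div 2) ((S2+1) div 2) x c b" using P by simp
      moreover have "(S2+2) div 2 + (S2+1) div 2 = S2 + 1" by presburger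
      ultimately show False using H unfolding semS_def semL_def by linarith
    qed
  qed
  then show "?G \<and> \<not> (\<exists>c\<in>{1..n}. ?P c)" using H unfolding semL_def by auto
qed

lemma arithS:
  fixes a v b n T1 T2 :: nat
  assumes "1 \<le> a" "a \<le> n" "1 \<le> v" "v \<le> n" "1 \<le> b" "b \<le> n"
  shows "((1 \<le> T1 \<and> 1 \<le> T2 \<and> a \<le> v \<and> v \<le> b) \<and>
     \<not>(\<exists>c\<in>{1..n}. if c \<le> v then semL ((T1+1) div 2) (T1 div 2) a c v
                    else semL ((T2+1) div 2) (T2 div 2) v c b))
    = semS T1 T2 a v b" (is "(?G \<and> \<not> (\<exists>c\<in>{1..n}. ?P c)) = _")
proof
  assume H: "?G \<and> \<not> (\<exists>c\<in>{1..n}. ?P c)"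
  show "semS T1 T2 a v b"
    unfolding semS_def
  proof (intro conjI)
    show "1 \<le> T1" "1 \<le> T2" "a \<le> v" "v \<le> b" using H by auto
    show "v - a < T1"
    proof (rule ccontr)
      assume A: "\<not> v - a < T1"
      have T: "(T1+1) div 2 + T1 div 2 = T1" by presburger
      define c where "c = a + (T1+1) div 2"
      have c1: "c \<in> {1..n}" "c \<le> v" using A H assms T unfolding c_def by auto
      have "semL ((T1+1) div 2) (T1 div 2) a c v" using c1 A H T unfolding semL_def c_def by auto
      then have "?P c" using c1 by simp
      then show False using H c1 by blast
    qed
    show "b - v < T2"
    proof (rule ccontr)
      assume A: "\<not> b - v < T2"
      have "1 \<le> T2" using H by auto
      then have T: "(T2+1) div 2 + T2 div 2 = T2" "1 \<le> (T2+1) div 2" by presburger+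
      define c where "c = v + (T2+1) div 2"
      have c1: "c \<in> {1..n}" "\<not> c \<le> v" using A H assms T unfolding c_def by auto
      have "semL ((T2+1) div 2) (T2 div 2) v c b" using c1 A H T unfolding semL_def c_def by auto
      then have "?P c" using c1 by simp
      then show False using H c1 by blast
    qed
  qed
next
  assume H: "semS T1 T2 a v b"
  have "\<not> ?P c" for c
  proof
    assume P: "?P c"
    show False
    proof (cases "c \<le> v")
      case True
      then have "semL ((T1+1) div 2) (T1 div 2) a c v" using P by simp
      moreover have "(T1+1) div 2 + T1 div 2 = T1" by presburger
      ultimately show False using H unfolding semS_def semL_def by linarith
    next
      case False
      then have "semL ((T2+1) div 2) (T2 div 2) v c b" using P by simp
      moreover have "(T2+1) div 2 + T2 div 2 = T2" by presburger
      ultimately show False using H unfolding semS_def semL_def by linarith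
    qed
  qed
  then show "?G \<and> \<not> (\<exists>c\<in>{1..n}. ?P c)" using H unfolding semS_def by auto
qed




definition le :: "tm \<Rightarrow> tm \<Rightarrow> fo" where "le s t = Neg (Less t s)"

definition GL :: "nat \<Rightarrow> nat \<Rightarrow> tm \<Rightarrow> tm \<Rightarrow> tm \<Rightarrow> fo" where
  "GL S1 S2 a x b = Conj (le a x) (Conj (le x b) (Conj (if 1 \<le> S1 then Less a x else FTrue) (if 1 \<le> S2 then Less x b else FTrue)))"
definition GS :: "nat \<Rightarrow> nat \<Rightarrow> tm \<Rightarrow> tm \<Rightarrow> tm \<Rightarrow> fo" where
  "GS T1 T2 a v b = (if 1 \<le> T1 \<and> 1 \<le> T2 then Conj (le a v) (le v b) else FFalse)"
definition GS0 :: "nat \<Rightarrow> nat \<Rightarrow> tm \<Rightarrow> tm \<Rightarrow> tm \<Rightarrow> fo" where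
  "GS0 T1 T2 a v b = Conj (GS T1 T2 a v b) (Conj (if T1 \<le> 1 then Eq a v else FTrue) (if T2 \<le> 1 then Eq v b else FTrue))"

fun F :: "bool \<Rightarrow> nat \<Rightarrow> nat \<Rightarrow> nat \<Rightarrow> tm \<Rightarrow> tm \<Rightarrow> tm \<Rightarrow> fo" where
  "F True 0 S1 S2 a x b = GL S1 S2 a x b"
| "F False 0 T1 T2 a v b = GS0 T1 T2 a v b"
| "F True (Suc k) S1 S2 a x b = Conj (GL S1 S2 a x b) (Neg (Exi k (ite (le (Var k) x)
      (F False k ((S1+2) div 2) ((S1+1) div 2) a (Var k) x)
      (F False k ((S2+2) div 2) ((S2+1) div 2) x (Var k) b))))"
| "F False (Suc k) T1 T2 a v b = Conj (GS T1 T2 a v b) (Neg (Exi k (ite (le (Var k) v)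
      (F True k ((T1+1) div 2) (T1 div 2) a (Var k) v)
      (F True k ((T2+1) div 2) (T2 div 2) v (Var k) b))))"

fun cap :: "bool \<Rightarrow> nat \<Rightarrow> nat" where
  "cap f 0 = 1"
| "cap True (Suc k) = 2 * cap False k - 1"
| "cap False (Suc k) = 2 * cap True k"

lemma qf_guards: "nquant (GL S1 S2 a x b) = 0" "nquant (GS T1 T2 a x b) = 0" "nquant (GS0 T1 T2 a x b) = 0"
  "nquant (le s t) = 0" "bv (GL S1 S2 a x b) = {}" "bv (GS T1 T2 a x b) = {}" "bv (GS0 T1 T2 a x b) = {}"
  "bv (le s t) = {}"
  by (auto simp: GL_def GS_def GS0_def le_def)

lemma fv_guards: "free_vars (GL S1 S2 a x b) \<subseteq> tm_vars a \<union> tm_vars x \<union> tm_vars b"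
  "free_vars (GS T1 T2 a x b) \<subseteq> tm_vars a \<union> tm_vars x \<union> tm_vars b"
  "free_vars (GS0 T1 T2 a x b) \<subseteq> tm_vars a \<union> tm_vars x \<union> tm_vars b"
  "free_vars (le s t) = tm_vars s \<union> tm_vars t"
  by (auto simp: GL_def GS_def GS0_def le_def)

lemma bv_F: "bv (F f k S1 S2 a x b) \<subseteq> {..<k}"
proof (induction k arbitrary: f S1 S2 a x b)
  case 0 then show ?case by (cases f) (auto simp: qf_guards)
next
  case (Suc k)
  show ?case
  proof (cases f)
    case True
    let ?A = "F False k ((S1+2) div 2) ((S1+1) div 2) a (Var k) x"
    let ?B = "F False k ((S2+2) div 2) ((S2+1) div 2) x (Var k) b"
    have "bv ?A \<subseteq> {..<k}" "bv ?B \<subseteq> {..<k}" by (rule Suc.IH)+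
    then have "bv (ite (le (Var k) x) ?A ?B) \<subseteq> {..<k}" using bv_ite[of "le (Var k) x" ?A ?B] by (auto simp: qf_guards)
    then show ?thesis using True by (auto simp: qf_guards)
  next
    case False
    let ?A = "F True k ((S1+1) div 2) (S1 div 2) a (Var k) x"
    let ?B = "F True k ((S2+1) div 2) (S2 div 2) x (Var k) b"
    have "bv ?A \<subseteq> {..<k}" "bv ?B \<subseteq> {..<k}" by (rule Suc.IH)+
    then have "bv (ite (le (Var k) x) ?A ?B) \<subseteq> {..<k}" using bv_ite[of "le (Var k) x" ?A ?B] by (auto simp: qf_guards)
    then show ?thesis using False by (auto simp: qf_guards)
  qed
qed

lemma fv_F: "free_vars (F f k S1 S2 a x b) \<subseteq> tm_vars a \<union> tm_vars x \<union> tm_vars b"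
proof (induction k arbitrary: f S1 S2 a x b)
  case 0 then show ?case using fv_guards by (cases f) auto
next
  case (Suc k)
  show ?case
  proof (cases f)
    case True
    let ?A = "F False k ((S1+2) div 2) ((S1+1) div 2) a (Var k) x"
    let ?B = "F False k ((S2+2) div 2) ((S2+1) div 2) x (Var k) b"
    have "free_vars ?A \<subseteq> tm_vars a \<union> {k} \<union> tm_vars x" "free_vars ?B \<subseteq> tm_vars x \<union> {k} \<union> tm_vars b"
      using Suc.IH by fastforce+
    then have "free_vars (ite (le (Var k) x) ?A ?B) \<subseteq> {k} \<union> tm_vars a \<union> tm_vars x \<union> tm_vars b"
      using fv_ite[of "le (Var k) x" ?A ?B] fv_guards(4)[of "Var k" x] by auto
    then show ?thesis using True fv_guards(1)[of S1 S2 a x b] by auto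
  next
    case False
    let ?A = "F True k ((S1+1) div 2) (S1 div 2) a (Var k) x"
    let ?B = "F True k ((S2+1) div 2) (S2 div 2) x (Var k) b"
    have "free_vars ?A \<subseteq> tm_vars a \<union> {k} \<union> tm_vars x" "free_vars ?B \<subseteq> tm_vars x \<union> {k} \<union> tm_vars b"
      using Suc.IH by fastforce+
    then have "free_vars (ite (le (Var k) x) ?A ?B) \<subseteq> {k} \<union> tm_vars a \<union> tm_vars x \<union> tm_vars b"
      using fv_ite[of "le (Var k) x" ?A ?B] fv_guards(4)[of "Var k" x] by auto
    then show ?thesis using False fv_guards(2)[of S1 S2 a x b] by auto
  qed
qed

lemma shape_step:
  assumes "\<And>S1 S2 a x b. nquant (F f k S1 S2 a x b) = k \<and> good (F f k S1 S2 a x b) \<and>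
              sh (F f k S1 S2 a x b) = sh (F f k 0 0 Cmin Cmin Cmin)"
  shows "nquant (ite (le (Var k) x) (F f k sa sb a (Var k) x) (F f k ta tb x (Var k) b)) = k \<and>
         good (ite (le (Var k) x) (F f k sa sb a (Var k) x) (F f k ta tb x (Var k) b)) \<and>
         sh (ite (le (Var k) x) (F f k sa sb a (Var k) x) (F f k ta tb x (Var k) b)) = sh (F f k 0 0 Cmin Cmin Cmin)"
proof -
  let ?A = "F f k sa sb a (Var k) x" and ?B = "F f k ta tb x (Var k) b"
  have "nquant ?A = k" "good ?A" "good ?B" "sh ?A = sh ?B" "sh ?A = sh (F f k 0 0 Cmin Cmin Cmin)"
    using assms by metis+
  moreover have "nquant (le (Var k) x) = 0" by (simp add: qf_guards)
  ultimately show ?thesis using ite_shape[of ?A ?B "le (Var k) x"] by auto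
qed

lemma shape_F: "nquant (F f k S1 S2 a x b) = k \<and> good (F f k S1 S2 a x b) \<and>
   sh (F f k S1 S2 a x b) = sh (F f k 0 0 Cmin Cmin Cmin)"
proof (induction k arbitrary: f S1 S2 a x b)
  case 0 then show ?case by (cases f) (auto simp: qf_guards qf_good sh_qf)
next
  case (Suc k)
  show ?case
  proof (cases f)
    case True
    note e = shape_step[of False k, OF Suc.IH]
    show ?thesis using True e[where x=x and a=a and b=b and sa="(S1+2) div 2" and sb="(S1+1) div 2" and ta="(S2+2) div 2" and tb = "(S2+1) div 2"]
       e[where x=Cmin and a=Cmin and b=Cmin and sa="(0+2) div 2" and sb="(0+1) div 2" and ta="(0+2) div 2" and tb = "(0+1) div 2"]
      by (simp add: qf_guards qf_good sh_qf)
  next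
    case False
    note e = shape_step[of True k, OF Suc.IH]
    show ?thesis using False e[where x=x and a=a and b=b and sa="(S1+1) div 2" and sb="S1 div 2" and ta="(S2+1) div 2" and tb = "S2 div 2"]
       e[where x=Cmin and a=Cmin and b=Cmin and sa="(0+1) div 2" and sb="0 div 2" and ta="(0+1) div 2" and tb = "0 div 2"]
      by (simp add: qf_guards qf_good sh_qf)
  qed
qed




lemma tm_eval_range: "(\<forall>i. \<sigma> i \<in> {1..length w}) \<Longrightarrow> 1 \<le> length w \<Longrightarrow> tm_eval w \<sigma> t \<in> {1..length w}"
  by (cases t) auto

lemma cap_pos2: "1 \<le> cap True k \<and> 1 \<le> cap False k"
  by (induction k) auto

lemma cap_pos: "1 \<le> cap f k"
  using cap_pos2[of k] by (cases f) auto

lemma GL_sem: "sat w \<sigma> (GL S1 S2 a x b) = (tm_eval w \<sigma> a \<le> tm_eval w \<sigma> x \<and> tm_eval w \<sigma> x \<le> tm_eval w \<sigma> b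
   \<and> (1 \<le> S1 \<longrightarrow> tm_eval w \<sigma> a < tm_eval w \<sigma> x) \<and> (1 \<le> S2 \<longrightarrow> tm_eval w \<sigma> x < tm_eval w \<sigma> b))"
  by (cases "1 \<le> S1"; cases "1 \<le> S2") (simp_all add: GL_def le_def not_less)

lemma GS_sem: "sat w \<sigma> (GS S1 S2 a x b) = (1 \<le> S1 \<and> 1 \<le> S2 \<and> tm_eval w \<sigma> a \<le> tm_eval w \<sigma> x \<and> tm_eval w \<sigma> x \<le> tm_eval w \<sigma> b)"
  by (auto simp: GS_def le_def not_less)

lemma GS0_sem: "sat w \<sigma> (GS0 S1 S2 a x b) = (sat w \<sigma> (GS S1 S2 a x b) \<and> (S1 \<le> 1 \<longrightarrow> tm_eval w \<sigma> a = tm_eval w \<sigma> x)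
    \<and> (S2 \<le> 1 \<longrightarrow> tm_eval w \<sigma> x = tm_eval w \<sigma> b))"
  by (cases "S1 \<le> 1"; cases "S2 \<le> 1") (simp_all add: GS0_def)

lemma baseL: "S1 \<le> 1 \<Longrightarrow> S2 \<le> 1 \<Longrightarrow> ((a::nat) \<le> x \<and> x \<le> b \<and> (1 \<le> S1 \<longrightarrow> a < x) \<and> (1 \<le> S2 \<longrightarrow> x < b)) = semL S1 S2 a x b"
  unfolding semL_def by presburger

lemma baseS: "S1 \<le> 1 \<Longrightarrow> S2 \<le> 1 \<Longrightarrow> ((1 \<le> S1 \<and> 1 \<le> S2 \<and> (a::nat) \<le> x \<and> x \<le> b) \<and> (S1 \<le> 1 \<longrightarrow> a = x) \<and> (S2 \<le> 1 \<longrightarrow> x = b)) = semS S1 S2 a x b"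
  unfolding semS_def by presburger

lemma F_sem:
  assumes "\<forall>i. \<sigma> i \<in> {1..length w}" "1 \<le> length w" "\<forall>i \<in> tm_vars a \<union> tm_vars x \<union> tm_vars b. k \<le> i"
    "S1 \<le> cap f k" "S2 \<le> cap f k"
  shows "sat w \<sigma> (F f k S1 S2 a x b) = (if f then semL S1 S2 (tm_eval w \<sigma> a) (tm_eval w \<sigma> x) (tm_eval w \<sigma> b)
      else semS S1 S2 (tm_eval w \<sigma> a) (tm_eval w \<sigma> x) (tm_eval w \<sigma> b))"
  using assms
proof (induction k arbitrary: f \<sigma> a x b S1 S2)
  case 0
  have s: "S1 \<le> 1" "S2 \<le> 1" using 0 by simp_all
  show ?case
  proof (cases f)
    case True
    have e: "F f 0 S1 S2 a x b = GL S1 S2 a x b" using True by simp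
    show ?thesis unfolding e GL_sem using True baseL[OF s] by (simp only: if_True)
  next
    case False
    have e: "F f 0 S1 S2 a x b = GS0 S1 S2 a x b" using False by simp
    show ?thesis unfolding e GS0_sem GS_sem using False baseS[OF s] by (simp only: if_False)
  qed
next
  case (Suc k)
  let ?n = "length w"
  let ?ea = "tm_eval w \<sigma> a" and ?ex = "tm_eval w \<sigma> x" and ?eb = "tm_eval w \<sigma> b"
  have ran: "?ea \<in> {1..?n}" "?ex \<in> {1..?n}" "?eb \<in> {1..?n}" using tm_eval_range Suc.prems(1,2) by blast+
  have kv: "Suc k \<le> i" if "t \<in> {a,x,b}" "i \<in> tm_vars t" for i t
    using Suc.prems(3) that by blast
  have agree: "tm_eval w (\<sigma>(k:=c)) t = tm_eval w \<sigma> t" if "t \<in> {a,x,b}" for c t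
  proof (rule tm_eval_agree, intro ballI)
    fix i assume "i \<in> tm_vars t"
    then have "Suc k \<le> i" using kv that by blast
    then show "(\<sigma>(k:=c)) i = \<sigma> i" by simp
  qed
  have ran': "\<forall>i. (\<sigma>(k:=c)) i \<in> {1..?n}" if "c \<in> {1..?n}" for c using Suc.prems(1) that by auto
  have fvle: "free_vars (le (Var k) t) \<subseteq> {k..}" if "t \<in> {a,x,b}" for t
  proof -
    have "free_vars (le (Var k) t) = {k} \<union> tm_vars t" by (simp add: le_def)
    then show ?thesis using kv[OF that] by force
  qed
  have evle: "sat w (\<sigma>(k:=c)) (le (Var k) t) = (c \<le> tm_eval w \<sigma> t)" if "t \<in> {a,x,b}" for c t
    using agree[OF that, of c] by (auto simp: le_def)
  have varsA: "\<forall>i \<in> tm_vars s \<union> tm_vars (Var k) \<union> tm_vars t. k \<le> i" if "s \<in> {a,x,b}" "t \<in> {a,x,b}" for s t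
  proof
    fix i assume "i \<in> tm_vars s \<union> tm_vars (Var k) \<union> tm_vars t"
    then consider "i \<in> tm_vars s" | "i = k" | "i \<in> tm_vars t" by auto
    then show "k \<le> i" using kv[OF that(1), of i] kv[OF that(2), of i] by cases auto
  qed
  have vAX: "\<forall>i \<in> tm_vars a \<union> tm_vars (Var k) \<union> tm_vars x. k \<le> i" by (rule varsA) simp_all
  have vXB: "\<forall>i \<in> tm_vars x \<union> tm_vars (Var k) \<union> tm_vars b. k \<le> i" by (rule varsA) simp_all
  show ?case
  proof (cases f)
    case True
    have c1: "(S1+2) div 2 \<le> cap False k" "(S1+1) div 2 \<le> cap False k"
         "(S2+2) div 2 \<le> cap False k" "(S2+1) div 2 \<le> cap False k"
    proof -
      have "S1 \<le> 2 * cap False k - 1" "S2 \<le> 2 * cap False k - 1" "1 \<le> cap False k"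
        using Suc.prems(4,5) True cap_pos[of False k] by simp_all
      then show "(S1+2) div 2 \<le> cap False k" "(S1+1) div 2 \<le> cap False k"
         "(S2+2) div 2 \<le> cap False k" "(S2+1) div 2 \<le> cap False k" by presburger+
    qed
    let ?A = "F False k ((S1+2) div 2) ((S1+1) div 2) a (Var k) x"
    let ?B = "F False k ((S2+2) div 2) ((S2+1) div 2) x (Var k) b"
    have IA: "sat w (\<sigma>(k:=c)) ?A = semS ((S1+2) div 2) ((S1+1) div 2) ?ea c ?ex" if "c \<in> {1..?n}" for c
    proof -
      note I = Suc.IH[OF ran'[OF that] Suc.prems(2) vAX c1(1,2)]
      have e1: "tm_eval w (\<sigma>(k:=c)) a = tm_eval w \<sigma> a" by (rule agree) simp
      have e2: "tm_eval w (\<sigma>(k:=c)) x = tm_eval w \<sigma> x" by (rule agree) simp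
      have e3: "tm_eval w (\<sigma>(k:=c)) (Var k) = c" by simp
      show ?thesis using I unfolding e1 e2 e3 if_False if_True .
    qed
    have IB: "sat w (\<sigma>(k:=c)) ?B = semS ((S2+2) div 2) ((S2+1) div 2) ?ex c ?eb" if "c \<in> {1..?n}" for c
    proof -
      note I = Suc.IH[OF ran'[OF that] Suc.prems(2) vXB c1(3,4)]
      have e1: "tm_eval w (\<sigma>(k:=c)) x = tm_eval w \<sigma> x" by (rule agree) simp
      have e2: "tm_eval w (\<sigma>(k:=c)) b = tm_eval w \<sigma> b" by (rule agree) simp
      have e3: "tm_eval w (\<sigma>(k:=c)) (Var k) = c" by simp
      show ?thesis using I unfolding e1 e2 e3 if_False if_True .
    qed
    have bA: "bv ?A \<subseteq> {..<k}" by (rule bv_F)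
    have fl: "free_vars (le (Var k) x) \<subseteq> {k..}" by (rule fvle) simp
    have bvA: "\<forall>y\<in>bv ?A. y \<notin> free_vars (le (Var k) x)"
    proof
      fix y assume "y \<in> bv ?A"
      then have "y < k" using bA by auto
      then show "y \<notin> free_vars (le (Var k) x)" using fl by auto
    qed
    have IT: "sat w (\<sigma>(k:=c)) (ite (le (Var k) x) ?A ?B) = (if c \<le> ?ex then semS ((S1+2) div 2) ((S1+1) div 2) ?ea c ?ex
        else semS ((S2+2) div 2) ((S2+1) div 2) ?ex c ?eb)" if "c \<in> {1..?n}" for c
    proof -
      have evx: "sat w (\<sigma>(k:=c)) (le (Var k) x) = (c \<le> ?ex)" by (rule evle) simp
      have "sat w (\<sigma>(k:=c)) (ite (le (Var k) x) ?A ?B) = (if sat w (\<sigma>(k:=c)) (le (Var k) x) then sat w (\<sigma>(k:=c)) ?A else sat w (\<sigma>(k:=c)) ?B)"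
        by (rule sat_ite[OF bvA])
      then show ?thesis unfolding evx IA[OF that] IB[OF that] .
    qed
    have G: "sat w \<sigma> (GL S1 S2 a x b) = (?ea \<le> ?ex \<and> ?ex \<le> ?eb \<and> (1 \<le> S1 \<longrightarrow> ?ea < ?ex) \<and> (1 \<le> S2 \<longrightarrow> ?ex < ?eb))"
      by (auto simp: GL_def le_def)
    have "sat w \<sigma> (F f (Suc k) S1 S2 a x b) = (sat w \<sigma> (GL S1 S2 a x b) \<and> \<not> (\<exists>c\<in>{1..?n}. sat w (\<sigma>(k:=c)) (ite (le (Var k) x) ?A ?B)))"
      using True by simp
    also have "\<dots> = semL S1 S2 ?ea ?ex ?eb"
    proof -
      have EX: "(\<exists>c\<in>{1..?n}. sat w (\<sigma>(k:=c)) (ite (le (Var k) x) ?A ?B)) = (\<exists>c\<in>{1..?n}. if c \<le> ?ex then semS ((S1+2) div 2) ((S1+1) div 2) ?ea c ?ex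
        else semS ((S2+2) div 2) ((S2+1) div 2) ?ex c ?eb)"
        by (rule bex_cong[OF refl IT])
      show ?thesis unfolding G EX by (rule arithL) (use ran in auto)
    qed
    finally show ?thesis using True by simp
  next
    case False
    have c1: "(S1+1) div 2 \<le> cap True k" "S1 div 2 \<le> cap True k"
         "(S2+1) div 2 \<le> cap True k" "S2 div 2 \<le> cap True k"
    proof -
      have "S1 \<le> 2 * cap True k" "S2 \<le> 2 * cap True k"
        using Suc.prems(4,5) False by simp_all
      then show "(S1+1) div 2 \<le> cap True k" "S1 div 2 \<le> cap True k"
         "(S2+1) div 2 \<le> cap True k" "S2 div 2 \<le> cap True k" by presburger+
    qed
    let ?A = "F True k ((S1+1) div 2) (S1 div 2) a (Var k) x"
    let ?B = "F True k ((S2+1) div 2) (S2 div 2) x (Var k) b"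
    have IA: "sat w (\<sigma>(k:=c)) ?A = semL ((S1+1) div 2) (S1 div 2) ?ea c ?ex" if "c \<in> {1..?n}" for c
    proof -
      note I = Suc.IH[OF ran'[OF that] Suc.prems(2) vAX c1(1,2)]
      have e1: "tm_eval w (\<sigma>(k:=c)) a = tm_eval w \<sigma> a" by (rule agree) simp
      have e2: "tm_eval w (\<sigma>(k:=c)) x = tm_eval w \<sigma> x" by (rule agree) simp
      have e3: "tm_eval w (\<sigma>(k:=c)) (Var k) = c" by simp
      show ?thesis using I unfolding e1 e2 e3 if_False if_True .
    qed
    have IB: "sat w (\<sigma>(k:=c)) ?B = semL ((S2+1) div 2) (S2 div 2) ?ex c ?eb" if "c \<in> {1..?n}" for c
    proof -
      note I = Suc.IH[OF ran'[OF that] Suc.prems(2) vXB c1(3,4)]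
      have e1: "tm_eval w (\<sigma>(k:=c)) x = tm_eval w \<sigma> x" by (rule agree) simp
      have e2: "tm_eval w (\<sigma>(k:=c)) b = tm_eval w \<sigma> b" by (rule agree) simp
      have e3: "tm_eval w (\<sigma>(k:=c)) (Var k) = c" by simp
      show ?thesis using I unfolding e1 e2 e3 if_False if_True .
    qed
    have bA: "bv ?A \<subseteq> {..<k}" by (rule bv_F)
    have fl: "free_vars (le (Var k) x) \<subseteq> {k..}" by (rule fvle) simp
    have bvA: "\<forall>y\<in>bv ?A. y \<notin> free_vars (le (Var k) x)"
    proof
      fix y assume "y \<in> bv ?A"
      then have "y < k" using bA by auto
      then show "y \<notin> free_vars (le (Var k) x)" using fl by auto
    qed
    have IT: "sat w (\<sigma>(k:=c)) (ite (le (Var k) x) ?A ?B) = (if c \<le> ?ex then semL ((S1+1) div 2) (S1 div 2) ?ea c ?ex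
        else semL ((S2+1) div 2) (S2 div 2) ?ex c ?eb)" if "c \<in> {1..?n}" for c
    proof -
      have evx: "sat w (\<sigma>(k:=c)) (le (Var k) x) = (c \<le> ?ex)" by (rule evle) simp
      have "sat w (\<sigma>(k:=c)) (ite (le (Var k) x) ?A ?B) = (if sat w (\<sigma>(k:=c)) (le (Var k) x) then sat w (\<sigma>(k:=c)) ?A else sat w (\<sigma>(k:=c)) ?B)"
        by (rule sat_ite[OF bvA])
      then show ?thesis unfolding evx IA[OF that] IB[OF that] .
    qed
    have G: "sat w \<sigma> (GS S1 S2 a x b) = (1 \<le> S1 \<and> 1 \<le> S2 \<and> ?ea \<le> ?ex \<and> ?ex \<le> ?eb)"
      by (auto simp: GS_def le_def)
    have "sat w \<sigma> (F f (Suc k) S1 S2 a x b) = (sat w \<sigma> (GS S1 S2 a x b) \<and> \<not> (\<exists>c\<in>{1..?n}. sat w (\<sigma>(k:=c)) (ite (le (Var k) x) ?A ?B)))"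
      using False by simp
    also have "\<dots> = semS S1 S2 ?ea ?ex ?eb"
    proof -
      have EX: "(\<exists>c\<in>{1..?n}. sat w (\<sigma>(k:=c)) (ite (le (Var k) x) ?A ?B)) = (\<exists>c\<in>{1..?n}. if c \<le> ?ex then semL ((S1+1) div 2) (S1 div 2) ?ea c ?ex
        else semL ((S2+1) div 2) (S2 div 2) ?ex c ?eb)"
        by (rule bex_cong[OF refl IT])
      show ?thesis unfolding G EX by (rule arithS) (use ran in auto)
    qed
    finally show ?thesis using False by simp
  qed
qed




definition alls :: "nat list \<Rightarrow> fo \<Rightarrow> fo" where "alls xs \<phi> = foldr Alli xs \<phi>"

lemma alls_true: "(\<And>\<sigma>. \<forall>i. \<sigma> i \<in> {1..length w} \<Longrightarrow> sat w \<sigma> \<phi>) \<Longrightarrow> \<forall>i. \<sigma> i \<in> {1..length w} \<Longrightarrow> sat w \<sigma> (alls xs \<phi>)"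
proof (induction xs arbitrary: \<sigma>)
  case Nil then show ?case by (simp add: alls_def)
next
  case (Cons x xs)
  have "sat w (\<sigma>(x:=a)) (alls xs \<phi>)" if "a \<in> {1..length w}" for a
    using Cons.IH[OF Cons.prems(1)] Cons.prems(2) that by auto
  then show ?case by (simp add: alls_def)
qed

lemma alls_inst: "sat w \<sigma> (alls xs \<phi>) \<Longrightarrow> \<forall>i. i \<notin> set xs \<longrightarrow> \<sigma>' i = \<sigma> i \<Longrightarrow> \<forall>i\<in>set xs. \<sigma>' i \<in> {1..length w}
   \<Longrightarrow> sat w \<sigma>' \<phi>"
proof (induction xs arbitrary: \<sigma>)
  case Nil
  then have "\<sigma>' = \<sigma>" by auto
  then show ?case using Nil by (simp add: alls_def)
next
  case (Cons x xs)
  have "sat w (\<sigma>(x := \<sigma>' x)) (alls xs \<phi>)" using Cons.prems(1,3) by (simp add: alls_def)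
  moreover have "\<forall>i. i \<notin> set xs \<longrightarrow> \<sigma>' i = (\<sigma>(x := \<sigma>' x)) i" using Cons.prems(2) by auto
  ultimately show ?case using Cons.IH Cons.prems(3) by auto
qed

lemma nquant_alls: "nquant (alls xs \<phi>) = length xs + nquant \<phi>"
  by (induction xs) (auto simp: alls_def)

lemma fv_alls: "free_vars (alls xs \<phi>) = free_vars \<phi> - set xs"
  by (induction xs) (auto simp: alls_def)

lemma sat_conjs: "sat w \<sigma> (foldr Conj ls FTrue) = (\<forall>l\<in>set ls. sat w \<sigma> l)"
  by (induction ls) auto

lemma fv_conjs: "free_vars (foldr Conj ls FTrue) = \<Union> (free_vars ` set ls)"
  by (induction ls) auto

lemma nquant_conjs: "\<forall>l\<in>set ls. nquant l = 0 \<Longrightarrow> nquant (foldr Conj ls FTrue) = 0"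
  by (induction ls) auto

definition iteL :: "(nat \<Rightarrow> fo) \<Rightarrow> (nat \<Rightarrow> fo) \<Rightarrow> nat list \<Rightarrow> fo \<Rightarrow> fo" where
  "iteL g th is d = foldr (\<lambda>i acc. ite (g i) (th i) acc) is d"

lemma iteL_all: "\<forall>i\<in>set is. \<forall>y\<in>bv (th i). y \<notin> free_vars (g i) \<Longrightarrow> \<forall>i\<in>set is. sat w \<sigma> (th i) \<Longrightarrow> sat w \<sigma> d
   \<Longrightarrow> sat w \<sigma> (iteL g th is d)"
  by (induction "is") (auto simp: iteL_def sat_ite)

lemma iteL_one: "\<forall>i\<in>set is. \<forall>y\<in>bv (th i). y \<notin> free_vars (g i) \<Longrightarrow> i0 \<in> set is \<Longrightarrow>
   \<forall>i\<in>set is. sat w \<sigma> (g i) = (i = i0) \<Longrightarrow> sat w \<sigma> (iteL g th is d) = sat w \<sigma> (th i0)"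
proof (induction "is")
  case Nil then show ?case by simp
next
  case (Cons i "is")
  show ?case
  proof (cases "i = i0")
    case True
    then show ?thesis using Cons.prems by (simp add: iteL_def sat_ite)
  next
    case False
    then have "i0 \<in> set is" using Cons.prems by auto
    then have "sat w \<sigma> (iteL g th is d) = sat w \<sigma> (th i0)" using Cons by auto
    then show ?thesis using False Cons.prems by (simp add: iteL_def sat_ite)
  qed
qed

lemma iteL_shape: "\<forall>i\<in>set is. good (th i) \<and> sh (th i) = sh d \<and> nquant (th i) = nquant d \<and> nquant (g i) = 0 \<Longrightarrow> good d \<Longrightarrow>
   nquant (iteL g th is d) = nquant d \<and> good (iteL g th is d) \<and> sh (iteL g th is d) = sh d"
proof (induction "is")
  case Nil then show ?case by (simp add: iteL_def)
next
  case (Cons i "is")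
  then have IH: "nquant (iteL g th is d) = nquant d \<and> good (iteL g th is d) \<and> sh (iteL g th is d) = sh d" by auto
  have "good (th i)" "sh (th i) = sh d" "nquant (g i) = 0" "nquant (th i) = nquant d" using Cons.prems by auto
  then have "nquant (ite (g i) (th i) (iteL g th is d)) = nquant (th i) \<and> sh (ite (g i) (th i) (iteL g th is d)) = sh (th i)
     \<and> good (ite (g i) (th i) (iteL g th is d))"
    using ite_shape[of "th i" "iteL g th is d" "g i"] IH by auto
  then show ?case using \<open>sh (th i) = sh d\<close> \<open>nquant (th i) = nquant d\<close> by (simp add: iteL_def)
qed




lemma delta_sem:
  assumes "\<forall>i. \<sigma> i \<in> {1..length u}" "length u = n" "p < n" "n \<le> cap True k"
  shows "sat u \<sigma> (F True k p (n - Suc p) Cmin (Var k) Cmax) = (\<sigma> k = Suc p)"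
proof -
  have n1: "1 \<le> length u" using assms by simp
  have "sat u \<sigma> (F True k p (n - Suc p) Cmin (Var k) Cmax) = semL p (n - Suc p) 1 (\<sigma> k) n"
    using F_sem[OF assms(1) n1, of Cmin "Var k" Cmax k p True "n - Suc p"] assms by simp
  also have "\<dots> = (\<sigma> k = Suc p)"
  proof -
    have "\<sigma> k \<in> {1..n}" using assms(1,2) by auto
    then show ?thesis unfolding semL_def using assms(3) by auto
  qed
  finally show ?thesis .
qed

lemma cap4: "4^j \<le> 2 * cap True (2*j) - 1"
proof (induction j)
  case 0 then show ?case by simp
next
  case (Suc j)
  have e: "cap True (2 * Suc j) = 4 * cap True (2*j) - 1"
    using cap_pos[of True "2*j"] by (simp add: numeral_eq_Suc)
  show ?case unfolding e using Suc cap_pos[of True "2*j"] by simp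
qed

lemma bits_eq: "(i::nat) < 2^K \<Longrightarrow> i' < 2^K \<Longrightarrow> \<forall>t<K. bit i t = bit i' t \<Longrightarrow> i = i'"
proof -
  assume a: "i < 2^K" "i' < 2^K" "\<forall>t<K. bit i t = bit i' t"
  have "bit i t = bit i' t" for t
  proof (cases "t < K")
    case True then show ?thesis using a by auto
  next
    case False
    then have "2^K \<le> (2::nat)^t" by simp
    then have "i < 2^t" "i' < 2^t" using a by linarith+
    then have "i div 2^t = 0" "i' div 2^t = 0" by simp_all
    then show ?thesis by (simp add: bit_iff_odd)
  qed
  then show "i = i'" by (simp add: bit_eq_iff)
qed

lemma log_bound: "(2::nat)^a < b \<Longrightarrow> real a < log 2 (real b)"
proof -
  assume h: "(2::nat)^a < b"
  then have "0 < real b" by simp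
  moreover have "2 powr real a < real b"
    using h by (simp add: powr_realpow)
  ultimately show ?thesis by (simp add: less_log_iff)
qed

lemma iteL_fv: "free_vars (iteL g th is d) \<subseteq> free_vars d \<union> (\<Union>i\<in>set is. free_vars (g i) \<union> free_vars (th i))"
proof (induction "is")
  case Nil then show ?case by (simp add: iteL_def)
next
  case (Cons i "is")
  then show ?case using fv_ite[of "g i" "th i" "iteL g th is d"] by (auto simp: iteL_def)
qed

lemma two_le_four: "2 * n \<le> (4::nat) ^ n"
proof (induction n)
  case (Suc n)
  have "1 \<le> (4::nat)^n" by simp
  then show ?case using Suc.IH by (simp; linarith)
qed simp

lemma main:
  fixes n :: nat and w :: "bool list" and B :: "bool list set"
  assumes n1: "n \<ge> 1" and lw: "length w = n" and Bne: "B \<noteq> {}" and Bsub: "B \<subseteq> {v. length v = n} - {w}"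
  shows "\<exists>\<phi>. sentence \<phi> \<and> real (nquant \<phi>) \<le> log 2 (real n) + log 2 (real (card B)) + 5 \<and>
           models w \<phi> \<and> (\<forall>w'\<in>B. \<not> models w' \<phi>)"
proof -
  have finB: "finite B"
  proof -
    have "finite {v::bool list. set v \<subseteq> UNIV \<and> length v = n}" by (rule finite_lists_length_eq) simp
    then have "finite {v::bool list. length v = n}" by simp
    then show ?thesis using Bsub by (meson Diff_subset finite_subset subset_trans)
  qed
  obtain bs where bs: "set bs = B" "distinct bs" using finite_distinct_list[OF finB] by blast
  define m where "m = length bs"
  have cardB: "card B = m" using bs distinct_card m_def by metis
  have m1: "1 \<le> m" using Bne bs m_def by (cases bs) auto
  have bsi: "bs ! i \<in> B" if "i < m" for i using bs that m_def by auto
  have lbs: "length (bs!i) = n" "bs!i \<noteq> w" if "i < m" for i using bsi[OF that] Bsub by auto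
  have ex: "\<exists>j<n. bs!i!j \<noteq> w!j" if "i < m" for i
  proof (rule ccontr)
    assume "\<not> (\<exists>j<n. bs!i!j \<noteq> w!j)"
    then have "bs!i = w" using lbs[OF that] lw by (auto intro: nth_equalityI)
    then show False using lbs[OF that] by simp
  qed
  define pj where "pj i = (SOME j. j < n \<and> bs!i!j \<noteq> w!j)" for i
  have pj: "pj i < n" "bs!i!(pj i) \<noteq> w!(pj i)" if "i < m" for i
    using someI_ex[OF ex[OF that]] unfolding pj_def by auto
  define K where "K = (LEAST K. m \<le> 2^K)"
  have mK: "m \<le> 2^K" unfolding K_def by (rule LeastI[of _ m]) (simp add: less_imp_le)
  have K2: "2^K < 2*m"
  proof (cases K)
    case 0 then show ?thesis using m1 by simp
  next
    case (Suc K')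
    then have "\<not> m \<le> 2^K'" using not_less_Least[of K' "\<lambda>K. m \<le> 2^K"] K_def by auto
    then show ?thesis using Suc by simp
  qed
  have n2: "2 \<le> n" if K0: "0 < K"
  proof (rule ccontr)
    assume "\<not> 2 \<le> n"
    then have n1': "n = 1" using n1 by simp
    obtain K' where "K = Suc K'" using K0 by (cases K) auto
    then have "\<not> m \<le> 2^K'" using not_less_Least[of K' "\<lambda>K. m \<le> 2^K"] K_def by auto
    moreover have "1 \<le> (2::nat)^K'" by simp
    ultimately have m2: "2 \<le> m" by linarith
    have "bs!0!0 \<noteq> w!0" "bs!1!0 \<noteq> w!0" using pj[of 0] pj[of 1] m2 n1' by auto
    then have "bs!0!0 = bs!1!0" by auto
    then have "bs!0 = bs!1" using lbs[of 0] lbs[of 1] m2 n1' by (auto intro: nth_equalityI)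
    moreover have "bs!0 \<noteq> bs!1"
    proof -
      have l: "0 < length bs" "1 < length bs" using m2 m_def by auto
      show ?thesis using nth_eq_iff_index_eq[OF bs(2) l] by simp
    qed
    ultimately show False by simp
  qed
  define J where "J = (LEAST j. 2*n \<le> (4::nat)^j)"
  have nJ: "2*n \<le> (4::nat)^J" unfolding J_def by (rule LeastI[of _ n]) (rule two_le_four)
  have J8: "(4::nat)^J < 8*n"
  proof (cases J)
    case 0 then show ?thesis using n1 by simp
  next
    case (Suc J')
    then have "\<not> 2*n \<le> (4::nat)^J'" using not_less_Least[of J' "\<lambda>j. 2*n \<le> (4::nat)^j"] J_def by auto
    then show ?thesis using Suc by simp
  qed
  define k where "k = 2*J"
  have capk: "n \<le> cap True k" using cap4[of J] nJ unfolding k_def by linarith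
  define y where "y t = k + 1 + t" for t
  define lit where "lit i = (if w!(pj i) then Neg (Sym (Var k)) else Sym (Var k))" for i
  define Th where "Th i = Neg (Conj (F True k (pj i) (n - Suc (pj i)) Cmin (Var k) Cmax) (lit i))" for i
  define Thd where "Thd = Neg (Conj (F True k 0 0 Cmin (Var k) Cmax) FFalse)"
  define gl where "gl (i::nat) (t::nat) = (if bit i t then Eq (Var (y t)) Cmin else Neg (Eq (Var (y t)) Cmin))" for i t
  define gd where "gd i = foldr Conj (map (gl i) [0..<K]) FTrue" for i
  define th where "th = iteL gd Th [0..<m] Thd"
  define xs where "xs = k # map y [0..<K]"
  define Phi where "Phi = alls xs th"

  have litq: "nquant (lit i) = 0" "good (lit i)" "sh (lit i) = FTrue" "bv (lit i) = {}" "free_vars (lit i) = {k}" for i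
    by (simp_all add: lit_def)
  have bvTh: "bv (Th i) \<subseteq> {..<k}" for i using bv_F[of True k] litq by (simp add: Th_def)
  have fvgd: "free_vars (gd i) \<subseteq> y ` {..<K}" for i by (auto simp: gd_def fv_conjs gl_def)
  have yk: "y t \<ge> Suc k" for t by (simp add: y_def)
  have fresh: "\<forall>i\<in>set [0..<m]. \<forall>v\<in>bv (Th i). v \<notin> free_vars (gd i)"
  proof (intro ballI)
    fix i v assume "v \<in> bv (Th i)"
    then have "v < k" using bvTh by auto
    show "v \<notin> free_vars (gd i)"
    proof
      assume "v \<in> free_vars (gd i)"
      then obtain t where "v = y t" using fvgd[of i] by blast
      then show False using yk[of t] \<open>v < k\<close> by simp
    qed
  qed
  have nqgd: "nquant (gd i) = 0" for i unfolding gd_def by (rule nquant_conjs) (auto simp: gl_def)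
  have shF: "nquant (F True k p q Cmin (Var k) Cmax) = k \<and> good (F True k p q Cmin (Var k) Cmax) \<and>
      sh (F True k p q Cmin (Var k) Cmax) = sh (F True k 0 0 Cmin Cmin Cmin)" for p q by (rule shape_F)
  have shTh: "good (Th i) \<and> sh (Th i) = sh Thd \<and> nquant (Th i) = nquant Thd" for i
    using shF[of "pj i" "n - Suc (pj i)"] shF[of 0 0] litq[of i] by (simp add: Th_def Thd_def sh_qf)
  have goodThd: "good Thd" using shF[of 0 0] by (simp add: Thd_def)
  have nqThd: "nquant Thd = k" using shF[of 0 0] by (simp add: Thd_def)
  have shth: "nquant th = nquant Thd" unfolding th_def using iteL_shape[of "[0..<m]" Th Thd gd] shTh nqgd goodThd by auto
  have nqPhi: "nquant Phi = Suc K + k" by (simp add: Phi_def nquant_alls xs_def shth nqThd)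
  have sent: "sentence Phi"
  proof -
    have fTh: "free_vars (Th i) \<subseteq> {k}" for i using fv_F[of True k "pj i" "n - Suc (pj i)" Cmin "Var k" Cmax] litq
      by (auto simp: Th_def)
    have fThd: "free_vars Thd \<subseteq> {k}" using fv_F[of True k 0 0 Cmin "Var k" Cmax] by (auto simp: Thd_def)
    have "free_vars th \<subseteq> {k} \<union> y ` {..<K}" unfolding th_def using iteL_fv[of gd Th "[0..<m]" Thd] fTh fThd fvgd by blast
    moreover have "set xs = {k} \<union> y ` {..<K}" by (auto simp: xs_def)
    ultimately show ?thesis unfolding sentence_def Phi_def fv_alls by auto
  qed
  have Th_w: "sat w \<sigma> (Th i)" if "\<forall>v. \<sigma> v \<in> {1..length w}" "i < m" for \<sigma> i
  proof -
    have d: "sat w \<sigma> (F True k (pj i) (n - Suc (pj i)) Cmin (Var k) Cmax) = (\<sigma> k = Suc (pj i))"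
      by (rule delta_sem[OF that(1) lw pj(1)[OF that(2)] capk])
    have "\<sigma> k = Suc (pj i) \<Longrightarrow> \<not> sat w \<sigma> (lit i)" by (auto simp: lit_def)
    then show ?thesis using d by (auto simp: Th_def)
  qed
  have th_w: "sat w \<sigma> th" if "\<forall>v. \<sigma> v \<in> {1..length w}" for \<sigma>
    unfolding th_def by (rule iteL_all[OF fresh]) (use Th_w[OF that] in \<open>auto simp: Thd_def\<close>)
  have mod_w: "models w Phi"
    unfolding models_def Phi_def by (rule alls_true) (use th_w n1 lw in auto)
  have notB: "\<not> models w' Phi" if "w' \<in> B" for w'
  proof
    assume M: "models w' Phi"
    have "w' \<in> set bs" using that bs by simp
    then obtain i where i: "i < m" "w' = bs!i" unfolding m_def in_set_conv_nth by auto
    have lw': "length w' = n" using lbs i by simp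
    define \<sigma> where "\<sigma> v = (if v = k then Suc (pj i) else if Suc k \<le> v \<and> v < Suc k + K then (if bit i (v - Suc k) then 1 else n) else 1)" for v
    have ran: "\<forall>v. \<sigma> v \<in> {1..length w'}" using pj(1)[OF i(1)] n1 lw' by (auto simp: \<sigma>_def)
    have setxs: "set xs = {k} \<union> y ` {..<K}" by (auto simp: xs_def)
    have off: "\<forall>v. v \<notin> set xs \<longrightarrow> \<sigma> v = (\<lambda>_. 1) v"
    proof (intro allI impI)
      fix v assume v: "v \<notin> set xs"
      then have "v \<noteq> k" using setxs by auto
      moreover have "\<not> (Suc k \<le> v \<and> v < Suc k + K)"
      proof
        assume h: "Suc k \<le> v \<and> v < Suc k + K"
        then have "v = y (v - Suc k)" "v - Suc k < K" by (auto simp: y_def)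
        then have "v \<in> set xs" unfolding setxs by blast
        then show False using v by simp
      qed
      ultimately show "\<sigma> v = (\<lambda>_. 1) v" unfolding \<sigma>_def by presburger
    qed
    have S: "sat w' \<sigma> th" using alls_inst[OF M[unfolded models_def Phi_def] off] ran by auto
    have gdsem: "sat w' \<sigma> (gd i') = (i' = i)" if "i' \<in> set [0..<m]" for i'
    proof -
      have i'm: "i' < m" using that by simp
      have "sat w' \<sigma> (gd i') = (\<forall>t<K. sat w' \<sigma> (gl i' t))" by (auto simp: gd_def sat_conjs)
      also have "\<dots> = (\<forall>t<K. bit i' t = bit i t)"
      proof (cases "K = 0")
        case True then show ?thesis by simp
      next
        case False
        then have "n \<noteq> 1" using n2 by fastforce
        then show ?thesis by (auto simp: gl_def \<sigma>_def y_def)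
      qed
      also have "\<dots> = (i' = i)" using bits_eq[of i' K i] i(1) i'm mK by auto
      finally show ?thesis .
    qed
    have "sat w' \<sigma> th = sat w' \<sigma> (Th i)" unfolding th_def
      by (rule iteL_one[OF fresh]) (use i(1) gdsem in auto)
    moreover have "\<not> sat w' \<sigma> (Th i)"
    proof -
      have d: "sat w' \<sigma> (F True k (pj i) (n - Suc (pj i)) Cmin (Var k) Cmax)"
      proof -
        have "\<sigma> k = Suc (pj i)" by (simp add: \<sigma>_def)
        then show ?thesis using delta_sem[OF ran lw' pj(1)[OF i(1)] capk] by simp
      qed
      have "w' ! (pj i) \<noteq> w ! (pj i)" using pj(2)[OF i(1)] i(2) by simp
      then have "sat w' \<sigma> (lit i)" by (auto simp: lit_def \<sigma>_def)
      then show ?thesis using d by (simp add: Th_def)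
    qed
    ultimately show False using S by simp
  qed
  have bound: "real (nquant Phi) \<le> log 2 (real n) + log 2 (real (card B)) + 5"
  proof -
    have a: "real K < log 2 (real (2*m))" using log_bound[OF K2] .
    have "(2::nat)^k < 8*n" using J8 unfolding k_def by (simp add: power_mult)
    then have b: "real k < log 2 (real (8*n))" using log_bound by blast
    have "log 2 (real (2*m)) = 1 + log 2 (real m)" using m1 by (simp add: log_mult)
    moreover have "log 2 (real (8*n)) = 3 + log 2 (real n)"
    proof -
      have "log 2 (real (8*n)) = log 2 (2^3) + log 2 (real n)" using n1 by (simp add: log_mult)
      moreover have "log 2 ((2::real)^3) = 3" using log_pow_cancel[of "2::real" 3] by simp
      ultimately show ?thesis by simp
    qed
    ultimately show ?thesis using a b nqPhi cardB by simp
  qed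
  show ?thesis using sent bound mod_w notB by blast
qed


theorem mainTheorem11:
  shows "\<exists>C::real. \<forall>n::nat. n \<ge> 1 \<longrightarrow>
     (\<forall>w::bool list. length w = n \<longrightarrow>
       (\<forall>B::bool list set. B \<noteq> {} \<longrightarrow> B \<subseteq> {v. length v = n} - {w} \<longrightarrow>
          (\<exists>\<phi>. sentence \<phi> \<and>
               real (nquant \<phi>) \<le> log 2 (real n) + log 2 (real (card B)) + C \<and>
               models w \<phi> \<and> (\<forall>w'\<in>B. \<not> models w' \<phi>))))"
  apply (rule exI[of _ 5])
  using main by blast

end
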